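(* Let $1\le p<\infty$. There exist sequences $a,b$ and a weight sequence $w$ as described in the context such that $B_w$ is a bounded operator on $\ell^p_{a,b}(\Omega_{r,R})$ which is not similar to any bilateral weighted backward shift $e_n\mapsto \alpha_ne_{n-1}$ (with bounded weights $(\alpha_n)$) on $\ell^p(\mathbb{Z})$.
   Context: For complex sequences $a=(a_n)_{n\in\mathbb{Z}}$ with $a_n\ne0$ and $b=(b_n)_{n\in\mathbb{Z}}$ satisfying $\sup_{n\le -1}\left|\frac{a_{n+1}\cdots a_0}{b_n\cdots b_{-1}}\right|=\infty$ (automatically regarded as satisfied when $b_n=0$ for all $n\le-1$), put $f_n(z)=(a_n+b_nz)z^n$; let $r=\limsup_{n\to+\infty}(|a_{-n}|+|b_{-n}|)^{1/n}$, $1/R=\limsup_{n\to+\infty}(|a_n|+|b_n|)^{1/n}$ (finite), with $r<R$, and $\Omega_{r,R}=\{r<|z|<R\}$. $\ell^p_{a,b}(\Omega_{r,R})$ is the Banach space of analytic functions on $\Omega_{r,R}$ of the form $f=\sum_{n}\lambda_nf_n$ with $(\lambda_n)\in\ell^p(\mathbb{Z})$, normed by $\|f\|=(\sum|\lambda_n|^p)^{1/p}$. For a complex sequence $w$, $B_w(\sum_n\widehat f(n)z^n)=\sum_nw_n\widehat f(n)z^{n-1}$ on Laurent expansions. $\{e_n\}$ is the standard basis of $\ell^p(\mathbb{Z})$. *)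

theory Defs
  imports "HOL-Complex_Analysis.Complex_Analysis"
begin

definition fblock :: "(int \<Rightarrow> complex) \<Rightarrow> (int \<Rightarrow> complex) \<Rightarrow> int \<Rightarrow> complex \<Rightarrow> complex" where
  "fblock a b n z = (a n + b n * z) * z powi n"

definition rad_in :: "(int \<Rightarrow> complex) \<Rightarrow> (int \<Rightarrow> complex) \<Rightarrow> ereal" where
  "rad_in a b = limsup (\<lambda>n::nat. ereal (root n (cmod (a (- int n)) + cmod (b (- int n)))))"

definition inv_rad_out :: "(int \<Rightarrow> complex) \<Rightarrow> (int \<Rightarrow> complex) \<Rightarrow> ereal" where
  "inv_rad_out a b = limsup (\<lambda>n::nat. ereal (root n (cmod (a (int n)) + cmod (b (int n)))))"

definition rad_out :: "(int \<Rightarrow> complex) \<Rightarrow> (int \<Rightarrow> complex) \<Rightarrow> ereal" where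
  "rad_out a b = inverse (inv_rad_out a b)"

text \<open>Standing assumptions on the pair of sequences (a,b).  The supremum condition is read as:
  either b_n = 0 for all n \<le> -1, or all these b_n are nonzero and the quotients are unbounded.\<close>
definition admissible :: "(int \<Rightarrow> complex) \<Rightarrow> (int \<Rightarrow> complex) \<Rightarrow> bool" where
  "admissible a b \<longleftrightarrow>
     (\<forall>n. a n \<noteq> 0) \<and>
     ((\<forall>n\<le>-1. b n = 0) \<or>
      ((\<forall>n\<le>-1. b n \<noteq> 0) \<and>
       \<not> bdd_above {cmod ((\<Prod>k\<in>{n+1..0}. a k) / (\<Prod>k\<in>{n..-1}. b k)) | n. n \<le> -1})) \<and>
     inv_rad_out a b < \<infinity> \<and>
     rad_in a b < rad_out a b"

definition annulus :: "ereal \<Rightarrow> ereal \<Rightarrow> complex set" where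
  "annulus r R = {z. r < ereal (cmod z) \<and> ereal (cmod z) < R}"

definition Omega :: "(int \<Rightarrow> complex) \<Rightarrow> (int \<Rightarrow> complex) \<Rightarrow> complex set" where
  "Omega a b = annulus (rad_in a b) (rad_out a b)"

definition lp :: "real \<Rightarrow> (int \<Rightarrow> complex) set" where
  "lp p = {x. (\<lambda>n. cmod (x n) powr p) summable_on UNIV}"

definition lpnorm :: "real \<Rightarrow> (int \<Rightarrow> complex) \<Rightarrow> real" where
  "lpnorm p x = (\<Sum>\<^sub>\<infinity>n. cmod (x n) powr p) powr (1 / p)"

text \<open>Functions on \<Omega> are represented as functions on \<complex> vanishing outside \<Omega>.
  The coefficient sequence l represents f if f = \<Sum> l_n f_n on \<Omega>.\<close>
definition represents :: "real \<Rightarrow> (int \<Rightarrow> complex) \<Rightarrow> (int \<Rightarrow> complex) \<Rightarrow> (int \<Rightarrow> complex) \<Rightarrow> (complex \<Rightarrow> complex) \<Rightarrow> bool" where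
  "represents p a b l f \<longleftrightarrow> l \<in> lp p \<and>
     (\<forall>z\<in>Omega a b. (\<lambda>n. l n * fblock a b n z) summable_on UNIV) \<and>
     (\<forall>z. f z = (if z \<in> Omega a b then (\<Sum>\<^sub>\<infinity>n. l n * fblock a b n z) else 0))"

definition lpab :: "real \<Rightarrow> (int \<Rightarrow> complex) \<Rightarrow> (int \<Rightarrow> complex) \<Rightarrow> (complex \<Rightarrow> complex) set" where
  "lpab p a b = {f. \<exists>l. represents p a b l f}"

definition lpab_norm :: "real \<Rightarrow> (int \<Rightarrow> complex) \<Rightarrow> (int \<Rightarrow> complex) \<Rightarrow> (complex \<Rightarrow> complex) \<Rightarrow> real" where
  "lpab_norm p a b f = Inf {lpnorm p l | l. represents p a b l f}"

definition laurent_coeff :: "(int \<Rightarrow> complex) \<Rightarrow> (int \<Rightarrow> complex) \<Rightarrow> (complex \<Rightarrow> complex) \<Rightarrow> int \<Rightarrow> complex" where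
  "laurent_coeff a b f n =
     (let \<rho> = (SOME \<rho>::real. 0 < \<rho> \<and> rad_in a b < ereal \<rho> \<and> ereal \<rho> < rad_out a b)
      in contour_integral (circlepath 0 \<rho>) (\<lambda>z. f z / z powi (n + 1)) / (2 * complex_of_real pi * \<i>))"

definition Bw :: "(int \<Rightarrow> complex) \<Rightarrow> (int \<Rightarrow> complex) \<Rightarrow> (int \<Rightarrow> complex) \<Rightarrow> (complex \<Rightarrow> complex) \<Rightarrow> (complex \<Rightarrow> complex)" where
  "Bw a b w f = (\<lambda>z. if z \<in> Omega a b
       then (\<Sum>\<^sub>\<infinity>n. w n * laurent_coeff a b f n * z powi (n - 1)) else 0)"

definition Bw_bounded :: "real \<Rightarrow> (int \<Rightarrow> complex) \<Rightarrow> (int \<Rightarrow> complex) \<Rightarrow> (int \<Rightarrow> complex) \<Rightarrow> bool" where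
  "Bw_bounded p a b w \<longleftrightarrow>
     (\<forall>f\<in>lpab p a b.
        (\<forall>z\<in>Omega a b. (\<lambda>n. w n * laurent_coeff a b f n * z powi (n - 1)) summable_on UNIV) \<and>
        Bw a b w f \<in> lpab p a b) \<and>
     (\<exists>C. \<forall>f\<in>lpab p a b. lpab_norm p a b (Bw a b w f) \<le> C * lpab_norm p a b f)"

text \<open>Bilateral weighted backward shift e_n \<mapsto> \<alpha>_n e_{n-1} on \<ell>^p(\<int>).\<close>
definition wshift :: "(int \<Rightarrow> complex) \<Rightarrow> (int \<Rightarrow> complex) \<Rightarrow> (int \<Rightarrow> complex)" where
  "wshift \<alpha> x = (\<lambda>m. \<alpha> (m + 1) * x (m + 1))"

definition Bw_similar_to_shift :: "real \<Rightarrow> (int \<Rightarrow> complex) \<Rightarrow> (int \<Rightarrow> complex) \<Rightarrow> (int \<Rightarrow> complex) \<Rightarrow> bool" where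
  "Bw_similar_to_shift p a b w \<longleftrightarrow>
     (\<exists>\<alpha> J. bounded (range \<alpha>) \<and>
        bij_betw J (lpab p a b) (lp p) \<and>
        (\<forall>f\<in>lpab p a b. \<forall>g\<in>lpab p a b. J (\<lambda>z. f z + g z) = (\<lambda>n. J f n + J g n)) \<and>
        (\<forall>c. \<forall>f\<in>lpab p a b. J (\<lambda>z. c * f z) = (\<lambda>n. c * J f n)) \<and>
        (\<exists>c C. 0 < c \<and> 0 < C \<and>
           (\<forall>f\<in>lpab p a b. c * lpab_norm p a b f \<le> lpnorm p (J f) \<and>
                              lpnorm p (J f) \<le> C * lpab_norm p a b f)) \<and>
        (\<forall>f\<in>lpab p a b. J (Bw a b w f) = wshift \<alpha> (J f)))"

end

theory Submission
  imports Defs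
begin


lemma int_split_nat: "(UNIV::int set) = range int \<union> range (\<lambda>n::nat. - int n - 1)"
proof -
  { fix x :: int
    have "x \<in> range int \<union> range (\<lambda>n::nat. - int n - 1)"
    proof (cases "x \<ge> 0")
      case True then show ?thesis by (metis UnI1 nonneg_int_cases rangeI)
    next
      case False
      then have "x = - int (nat (-x-1)) - 1" by simp
      then show ?thesis by (metis UnI2 rangeI)
    qed }
  then show ?thesis by auto
qed

lemma real_nonneg_int_summable:
  fixes M :: "int \<Rightarrow> real"
  assumes "\<And>n. M n \<ge> 0" "summable (\<lambda>n. M (int n))" "summable (\<lambda>n. M (- int n - 1))"
  shows "M summable_on UNIV"
proof -
  have 1: "M summable_on range int"
    using assms by (subst summable_on_reindex) (auto simp: summable_on_UNIV_nonneg_real_iff o_def)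
  have 2: "M summable_on range (\<lambda>n::nat. - int n - 1)"
    using assms by (subst summable_on_reindex) (auto simp: inj_on_def summable_on_UNIV_nonneg_real_iff o_def)
  show ?thesis using summable_on_union[OF 1 2] int_split_nat by simp
qed

lemma geo_int_summable:
  fixes \<theta> :: real
  assumes "0 \<le> \<theta>" "\<theta> < 1"
  shows "(\<lambda>n::int. \<theta> ^ nat \<bar>n\<bar>) summable_on UNIV"
proof (rule real_nonneg_int_summable)
  show "summable (\<lambda>n. \<theta> ^ nat \<bar>int n\<bar>)" using assms by simp
  have "(\<lambda>n::nat. \<theta> ^ nat \<bar>- int n - 1\<bar>) = (\<lambda>n. \<theta> * \<theta> ^ n)"
    by (auto simp: fun_eq_iff nat_add_distrib)
  then show "summable (\<lambda>n::nat. \<theta> ^ nat \<bar>- int n - 1\<bar>)" using assms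
    by (simp add: summable_mult)
qed (use assms in auto)

lemma complex_dominated_summable:
  fixes g :: "int \<Rightarrow> complex"
  assumes "M summable_on A" "\<And>n. n \<in> A \<Longrightarrow> norm (g n) \<le> M n"
  shows "g summable_on A"
proof -
  have "(\<lambda>n. norm (g n)) summable_on A"
    by (rule summable_on_comparison_test[OF assms(1)]) (use assms in auto)
  then show ?thesis by (rule abs_summable_summable)
qed

lemma geo_dominated_summable:
  fixes g :: "int \<Rightarrow> complex"
  assumes "0 \<le> \<theta>" "\<theta> < 1" "\<And>n. norm (g n) \<le> K * \<theta> ^ nat \<bar>n\<bar>"
  shows "g summable_on UNIV"
  by (rule complex_dominated_summable[OF summable_on_cmult_right[OF geo_int_summable[OF assms(1,2)]]])
     (use assms(3) in auto)



lemma circ_powi: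
  assumes "0 < \<rho>"
  shows "((\<lambda>z::complex. z powi m) has_contour_integral (if m = -1 then 2 * of_real pi * \<i> else 0)) (circlepath 0 \<rho>)"
proof (cases "m = -1")
  case True
  have cont: "continuous_on (path_image (circlepath 0 \<rho>)) (\<lambda>z::complex. 1 / (z - 0))"
    using assms by (intro continuous_intros) auto
  have "((\<lambda>z::complex. 1 / (z - 0)) has_contour_integral 2 * of_real pi * \<i>) (circlepath 0 \<rho>)"
    using has_contour_integral_integral[OF contour_integrable_continuous_circlepath[OF cont]]
      contour_integral_circlepath[OF assms, of 0] by simp
  moreover have "(\<lambda>z::complex. z powi m) = (\<lambda>z::complex. 1 / (z - 0))"
    using True by (auto simp: fun_eq_iff power_int_minus divide_inverse)
  ultimately show ?thesis using True by simp
next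
  case False
  have "((\<lambda>z::complex. z powi m) has_contour_integral 0) (circlepath 0 \<rho>)"
  proof (rule Cauchy_theorem_primitive[where S = "- {0}" and f = "\<lambda>z. z powi (m+1) / of_int (m+1)"])
    fix x :: complex assume "x \<in> - {0}"
    then have x: "x \<noteq> 0" by auto
    have "((\<lambda>z::complex. z powi (m+1)) has_field_derivative (of_int (m+1) * x powi (m+1-1) * 1)) (at x within - {0})"
      by (rule DERIV_power_int) (use x in \<open>auto intro: derivative_eq_intros\<close>)
    then have "((\<lambda>z::complex. z powi (m+1) / of_int (m+1)) has_field_derivative (of_int (m+1) * x powi (m+1-1) * 1) / of_int (m+1)) (at x within - {0})"
      by (rule DERIV_cdivide)
    moreover have "(of_int (m+1) * x powi (m+1-1) * 1) / of_int (m+1) = x powi m"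
    proof -
      have m1: "(of_int (m+1) :: complex) \<noteq> 0"
        using False by (metis add.commute add_eq_0_iff of_int_eq_0_iff)
      then show ?thesis by simp
    qed
    ultimately show "((\<lambda>z::complex. z powi (m+1) / of_int (m+1)) has_field_derivative x powi m) (at x within - {0})"
      by simp
  qed (use assms in auto)
  then show ?thesis using False by simp
qed

lemma laurent_coeff_series:
  fixes d :: "int \<Rightarrow> complex" and \<rho> :: real
  assumes \<rho>: "0 < \<rho>" and summ: "(\<lambda>n. norm (d n) * \<rho> powi n) summable_on UNIV"
    and F: "\<And>z. z \<in> sphere 0 \<rho> \<Longrightarrow> F z = (\<Sum>\<^sub>\<infinity>n. d n * z powi n)"
  shows "contour_integral (circlepath 0 \<rho>) (\<lambda>z. F z / z powi (k+1)) = 2 * of_real pi * \<i> * d k"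
proof -
  define g where "g n z = d n * z powi (n - (k+1))" for n z
  define I where "I n = d n * (if n - (k+1) = -1 then 2 * of_real pi * \<i> else 0)" for n
  have gI: "(g n has_contour_integral I n) (circlepath 0 \<rho>)" for n
    unfolding g_def I_def by (intro has_contour_integral_lmul circ_powi \<rho>)
  define M where "M n = norm (d n) * \<rho> powi n * \<rho> powi (-(k+1))" for n
  have Msum: "M summable_on UNIV" unfolding M_def by (intro summable_on_cmult_left summ)
  have Mb: "norm (g n z) \<le> M n" if "z \<in> sphere 0 \<rho>" for n z
  proof -
    have "norm z = \<rho>" using that by auto
    then have "norm (g n z) = norm (d n) * \<rho> powi (n - (k+1))"
      by (simp add: g_def norm_mult norm_power_int)
    also have "\<dots> = M n" using \<rho> by (simp add: M_def power_int_diff power_int_minus power_int_add divide_inverse)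
    finally show ?thesis by simp
  qed
  have ul: "uniform_limit (sphere 0 \<rho>) (\<lambda>X z. \<Sum>n\<in>X. g n z) (\<lambda>z. \<Sum>\<^sub>\<infinity>n. g n z) (finite_subsets_at_top UNIV)"
    by (rule Weierstrass_m_test_general[OF _ Msum]) (use Mb in auto)
  have ev: "\<forall>\<^sub>F X in finite_subsets_at_top UNIV. (\<lambda>z. \<Sum>n\<in>X. g n z) contour_integrable_on (circlepath 0 \<rho>)"
  proof (rule eventually_finite_subsets_at_top_weakI)
    fix X :: "int set" assume "finite X"
    then show "(\<lambda>z. \<Sum>n\<in>X. g n z) contour_integrable_on (circlepath 0 \<rho>)"
      using has_contour_integral_sum[OF \<open>finite X\<close>, of g I, OF gI] has_contour_integral_integrable by blast
  qed
  note lim = contour_integral_uniform_limit_circlepath[OF ev ul _ \<rho>]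
  have ci: "contour_integral (circlepath 0 \<rho>) (\<lambda>z. \<Sum>n\<in>X. g n z) = (\<Sum>n\<in>X. I n)" if "finite X" for X
    using that gI by (intro contour_integral_unique has_contour_integral_sum) auto
  have "(I has_sum contour_integral (circlepath 0 \<rho>) (\<lambda>z. \<Sum>\<^sub>\<infinity>n. g n z)) UNIV"
    unfolding has_sum_def
  proof (rule Lim_transform_eventually[OF lim(2)])
    show "\<forall>\<^sub>F X in finite_subsets_at_top UNIV. contour_integral (circlepath 0 \<rho>) (\<lambda>z. \<Sum>n\<in>X. g n z) = sum I X"
      by (rule eventually_finite_subsets_at_top_weakI) (use ci in auto)
  qed simp
  moreover have "(I has_sum (2 * of_real pi * \<i> * d k)) UNIV"
  proof -
    have "(I has_sum (2 * of_real pi * \<i> * d k)) {k}"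
      by (rule has_sum_finiteI) (auto simp: I_def)
    then show ?thesis
      by (subst has_sum_cong_neutral[where T = "{k}"]) (auto simp: I_def)
  qed
  ultimately have eq: "contour_integral (circlepath 0 \<rho>) (\<lambda>z. \<Sum>\<^sub>\<infinity>n. g n z) = 2 * of_real pi * \<i> * d k"
    using has_sum_unique by blast
  have "contour_integral (circlepath 0 \<rho>) (\<lambda>z. F z / z powi (k+1)) = contour_integral (circlepath 0 \<rho>) (\<lambda>z. \<Sum>\<^sub>\<infinity>n. g n z)"
  proof (rule contour_integral_eq)
    fix z assume "z \<in> path_image (circlepath 0 \<rho>)"
    then have z: "z \<in> sphere 0 \<rho>" using \<rho> by simp
    then have z0: "z \<noteq> 0" using \<rho> by auto
    have "F z / z powi (k+1) = (\<Sum>\<^sub>\<infinity>n. d n * z powi n) * inverse (z powi (k+1))"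
      using F[OF z] by (simp add: divide_inverse)
    also have "\<dots> = (\<Sum>\<^sub>\<infinity>n. d n * z powi n * inverse (z powi (k+1)))"
      by (rule infsum_cmult_left'[symmetric])
    also have "\<dots> = (\<Sum>\<^sub>\<infinity>n. g n z)"
      using z0 by (intro infsum_cong) (simp add: g_def power_int_diff divide_inverse)
    finally show "F z / z powi (k+1) = (\<Sum>\<^sub>\<infinity>n. g n z)" .
  qed
  with eq show ?thesis by simp
qed



definition Pw :: "real \<Rightarrow> int \<Rightarrow> real" where
  "Pw p n = (if n < 0 then 1 else (real_of_int n + 1) powr (1 + 1/p))"
definition ea :: "int \<Rightarrow> complex" where
  "ea n = (if n < 0 then (1/2) ^ nat (-n) else 1)"
definition eb :: "real \<Rightarrow> int \<Rightarrow> complex" where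
  "eb p n = (if n < 0 then 0 else complex_of_real (Pw p n / Pw p (n+1)))"
definition ew :: "real \<Rightarrow> int \<Rightarrow> complex" where
  "ew p n = (if n \<le> 0 then 0 else complex_of_real (Pw p n / Pw p (n-1)))"

lemma Pw_ge1: "p > 0 \<Longrightarrow> Pw p n \<ge> 1"
  by (auto simp: Pw_def intro!: ge_one_powr_ge_zero)

lemma Pw_pos: "p > 0 \<Longrightarrow> Pw p n > 0"
  using Pw_ge1[of p n] by linarith

lemma Pw0[simp]: "Pw p 0 = 1"
  by (simp add: Pw_def)

lemma Pw_mono: "p > 0 \<Longrightarrow> 0 \<le> n \<Longrightarrow> Pw p n \<le> Pw p (n+1)"
  by (auto simp: Pw_def intro!: powr_mono2)

lemma Pw_ratio_le1: "p > 0 \<Longrightarrow> 0 \<le> n \<Longrightarrow> Pw p n / Pw p (n+1) \<le> 1"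
  using Pw_mono[of p n] Pw_pos[of p "n+1"] by simp

lemma Pw_ratio_le4:
  assumes "p \<ge> 1" "0 \<le> n"
  shows "Pw p (n+1) / Pw p n \<le> 4"
proof -
  have s1: "0 \<le> 1 + 1/p" "1 + 1/p \<le> 2" using assms by (auto simp: field_simps)
  have "Pw p (n+1) = (real_of_int n + 2) powr (1 + 1/p)" using assms by (simp add: Pw_def add.commute add.left_commute)
  also have "\<dots> \<le> (2 * (real_of_int n + 1)) powr (1 + 1/p)"
    using assms s1 by (intro powr_mono2) auto
  also have "\<dots> = 2 powr (1 + 1/p) * Pw p n" using assms by (simp add: Pw_def powr_mult[symmetric])
  also have "\<dots> \<le> 2 powr 2 * Pw p n"
    using s1 Pw_pos[of p n] assms by (intro mult_right_mono powr_mono) auto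
  finally show ?thesis using Pw_pos[of p n] assms by (simp add: field_simps)
qed

lemma Pw_powr: "p > 0 \<Longrightarrow> 0 \<le> n \<Longrightarrow> Pw p n powr p = (real_of_int n + 1) powr (p + 1)"
proof -
  assume "p > 0" "0 \<le> n"
  then have "(1 + 1/p) * p = p + 1" by (simp add: field_simps)
  with \<open>0 \<le> n\<close> show ?thesis by (simp add: Pw_def powr_powr)
qed

lemma ea_nz: "ea n \<noteq> 0" by (simp add: ea_def)

lemma norm_ea: "n < 0 \<Longrightarrow> norm (ea n) = (1/2) ^ nat (-n)" "n \<ge> 0 \<Longrightarrow> ea n = 1"
  by (auto simp: ea_def norm_power)

lemma norm_eb_le1: "p > 0 \<Longrightarrow> norm (eb p n) \<le> 1"
  using Pw_ratio_le1[of p n] Pw_pos[of p n] Pw_pos[of p "n+1"]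
  by (auto simp: eb_def norm_divide)

lemma norm_ew_le4: "p \<ge> 1 \<Longrightarrow> norm (ew p n) \<le> 4"
  using Pw_ratio_le4[of p "n-1"] Pw_pos[of p n] Pw_pos[of p "n-1"]
  by (auto simp: ew_def norm_divide)

lemma rad_in_ex: "rad_in ea (eb p) = ereal (1/2)"
proof -
  have "((\<lambda>n::nat. ereal (root n (cmod (ea (- int n)) + cmod (eb p (- int n))))) \<longlongrightarrow> ereal (1/2)) sequentially"
  proof (rule Lim_transform_eventually[OF tendsto_const])
    show "\<forall>\<^sub>F n in sequentially. ereal (1/2) = ereal (root n (cmod (ea (- int n)) + cmod (eb p (- int n))))"
      using eventually_gt_at_top[of "0::nat"]
    proof (rule eventually_mono)
      fix n :: nat assume "0 < n"
      then have "ea (- int n) = (1/2) ^ n" "eb p (- int n) = 0" by (auto simp: ea_def eb_def)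
      then show "ereal (1/2) = ereal (root n (cmod (ea (- int n)) + cmod (eb p (- int n))))"
        using \<open>0 < n\<close> by (simp add: norm_power real_root_pos2)
    qed
  qed
  then show ?thesis unfolding rad_in_def by (intro lim_imp_Limsup) auto
qed

lemma inv_rad_out_ex:
  assumes "p > 0"
  shows "inv_rad_out ea (eb p) = ereal 1"
proof -
  have "((\<lambda>n::nat. root n (cmod (ea (int n)) + cmod (eb p (int n)))) \<longlongrightarrow> 1) sequentially"
  proof (rule real_tendsto_sandwich[OF _ _ tendsto_const LIMSEQ_root_const[of 2]])
    show "\<forall>\<^sub>F n in sequentially. 1 \<le> root n (cmod (ea (int n)) + cmod (eb p (int n)))"
      using eventually_gt_at_top[of "0::nat"]
      by (rule eventually_mono) (auto simp: ea_def)
    show "\<forall>\<^sub>F n in sequentially. root n (cmod (ea (int n)) + cmod (eb p (int n))) \<le> root n 2"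
      using eventually_gt_at_top[of "0::nat"]
      by (rule eventually_mono) (use norm_eb_le1[OF assms, of "int _"] in \<open>auto simp: ea_def\<close>)
  qed auto
  then have "((\<lambda>n::nat. ereal (root n (cmod (ea (int n)) + cmod (eb p (int n))))) \<longlongrightarrow> ereal 1) sequentially"
    by (simp add: lim_ereal)
  then show ?thesis unfolding inv_rad_out_def by (intro lim_imp_Limsup) auto
qed

lemma rad_out_ex: "p > 0 \<Longrightarrow> rad_out ea (eb p) = 1"
  by (simp add: rad_out_def inv_rad_out_ex one_ereal_def)

lemma Omega_ex: "p > 0 \<Longrightarrow> Omega ea (eb p) = {z. 1/2 < cmod z \<and> cmod z < 1}"
  by (simp add: Omega_def annulus_def rad_in_ex rad_out_ex one_ereal_def)

lemma admissible_ex: "p > 0 \<Longrightarrow> admissible ea (eb p)"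
  unfolding admissible_def
  by (auto simp: ea_nz inv_rad_out_ex rad_in_ex rad_out_ex eb_def one_ereal_def)



definition th :: "real \<Rightarrow> real" where "th r = max r (1 / (2 * r))"

lemma th_props: "1/2 < r \<Longrightarrow> r < 1 \<Longrightarrow> 0 \<le> th r \<and> th r < 1 \<and> r \<le> th r \<and> 1/(2*r) \<le> th r"
  by (auto simp: th_def field_simps)

lemma ea_bound:
  assumes "1/2 < r" "r < 1"
  shows "cmod (ea n) * r powi n \<le> th r ^ nat \<bar>n\<bar>"
proof (cases "n < 0")
  case True
  define k where "k = nat (-n)"
  have n: "n = - int k" using True by (simp add: k_def)
  have "cmod (ea n) * r powi n = (1/2)^k * inverse (r ^ k)"
    using True by (simp add: norm_ea n power_int_minus)
  also have "\<dots> = (1 / (2*r)) ^ k" by (simp add: power_divide field_simps power_mult_distrib)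
  also have "\<dots> \<le> th r ^ k" using th_props[OF assms] assms by (intro power_mono) auto
  finally show ?thesis by (simp add: n)
next
  case False
  then obtain k where n: "n = int k" by (metis nonneg_int_cases not_less)
  have "cmod (ea n) * r powi n = r ^ k" using False by (simp add: norm_ea n)
  also have "\<dots> \<le> th r ^ k" using th_props[OF assms] assms by (intro power_mono) auto
  finally show ?thesis by (simp add: n)
qed

lemma eb_bound:
  assumes "1/2 < r" "r < 1" "p > 0"
  shows "cmod (eb p (n-1)) * r powi n \<le> th r ^ nat \<bar>n\<bar>"
proof (cases "n \<le> 0")
  case True
  then show ?thesis using th_props[OF assms(1,2)] by (simp add: eb_def)
next
  case False
  then obtain k where n: "n = int k" by (metis nonneg_int_cases not_less less_imp_le not_le)
  have "cmod (eb p (n-1)) * r powi n \<le> 1 * r ^ k"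
    using assms norm_eb_le1[OF assms(3), of "n-1"] by (intro mult_mono) (auto simp: n)
  also have "\<dots> \<le> th r ^ k" using th_props[OF assms(1,2)] assms by (simp add: power_mono)
  finally show ?thesis by (simp add: n)
qed

lemma lp_bound:
  assumes "l \<in> lp p" "p > 0"
  shows "cmod (l n) \<le> lpnorm p l"
proof -
  have s: "(\<lambda>n. cmod (l n) powr p) summable_on UNIV" using assms by (simp add: lp_def)
  have "cmod (l n) powr p = (\<Sum>\<^sub>\<infinity>m\<in>{n}. cmod (l m) powr p)" by simp
  also have "\<dots> \<le> (\<Sum>\<^sub>\<infinity>m. cmod (l m) powr p)"
    by (rule infsum_mono2[OF _ s]) auto
  finally have "(cmod (l n) powr p) powr (1/p) \<le> (\<Sum>\<^sub>\<infinity>m. cmod (l m) powr p) powr (1/p)"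
    using assms by (intro powr_mono2) auto
  then show ?thesis using assms by (simp add: lpnorm_def powr_powr)
qed

lemma lpnorm_nonneg: "lpnorm p l \<ge> 0"
  by (simp add: lpnorm_def)

definition cof :: "real \<Rightarrow> (int \<Rightarrow> complex) \<Rightarrow> int \<Rightarrow> complex" where
  "cof p l k = ea k * l k + eb p (k-1) * l (k-1)"

lemma cof_bound:
  assumes "1/2 < r" "r < 1" "p > 0" "\<And>m. cmod (l m) \<le> B"
  shows "cmod (cof p l n) * r powi n \<le> 2 * B * th r ^ nat \<bar>n\<bar>"
proof -
  have B: "0 \<le> B" using assms(4)[of 0] norm_ge_zero order_trans by blast
  have rp: "0 < r powi n" using assms by simp
  have "cmod (cof p l n) * r powi n \<le> (cmod (ea n) * cmod (l n) + cmod (eb p (n-1)) * cmod (l (n-1))) * r powi n"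
    unfolding cof_def using rp by (intro mult_right_mono) (auto intro: norm_triangle_le simp: norm_mult)
  also have "\<dots> = (cmod (ea n) * r powi n) * cmod (l n) + (cmod (eb p (n-1)) * r powi n) * cmod (l (n-1))"
    by (simp add: algebra_simps)
  also have "\<dots> \<le> th r ^ nat \<bar>n\<bar> * B + th r ^ nat \<bar>n\<bar> * B"
    using ea_bound[OF assms(1,2), of n] eb_bound[OF assms(1,2,3), of n] assms(4) B th_props[OF assms(1,2)]
    by (intro add_mono mult_mono) auto
  finally show ?thesis by simp
qed

lemma z_omega: "p > 0 \<Longrightarrow> z \<in> Omega ea (eb p) \<longleftrightarrow> 1/2 < cmod z \<and> cmod z < 1"
  by (simp add: Omega_ex)

lemma lemmaR:
  assumes p: "p > 0" and l: "l \<in> lp p" and z: "1/2 < cmod z" "cmod z < 1"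
  shows "(\<lambda>n. l n * fblock ea (eb p) n z) summable_on UNIV"
    and "(\<lambda>n. cof p l n * z powi n) summable_on UNIV"
    and "(\<Sum>\<^sub>\<infinity>n. l n * fblock ea (eb p) n z) = (\<Sum>\<^sub>\<infinity>n. cof p l n * z powi n)"
proof -
  define r where "r = cmod z"
  have r: "1/2 < r" "r < 1" using z by (auto simp: r_def)
  have z0: "z \<noteq> 0" using z by auto
  define B where "B = lpnorm p l"
  have lB: "cmod (l m) \<le> B" for m using lp_bound[OF l p] by (simp add: B_def)
  have B0: "0 \<le> B" by (simp add: B_def lpnorm_nonneg)
  note thp = th_props[OF r]
  define A where "A n = ea n * l n * z powi n" for n
  define Bn where "Bn n = eb p n * l n * z powi (n+1)" for n
  define B' where "B' m = eb p (m-1) * l (m-1) * z powi m" for m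
  have sA: "A summable_on UNIV"
  proof (rule geo_dominated_summable[of "th r" _ B])
    fix n
    have "norm (A n) = (cmod (ea n) * r powi n) * cmod (l n)"
      by (simp add: A_def norm_mult norm_power_int r_def)
    also have "\<dots> \<le> th r ^ nat \<bar>n\<bar> * B"
      using ea_bound[OF r, of n] lB[of n] thp B0 by (intro mult_mono) auto
    finally show "norm (A n) \<le> B * th r ^ nat \<bar>n\<bar>" by (simp add: mult.commute)
  qed (use thp in auto)
  have sB': "B' summable_on UNIV"
  proof (rule geo_dominated_summable[of "th r" _ B])
    fix n
    have "norm (B' n) = (cmod (eb p (n-1)) * r powi n) * cmod (l (n-1))"
      by (simp add: B'_def norm_mult norm_power_int r_def)
    also have "\<dots> \<le> th r ^ nat \<bar>n\<bar> * B"
      using eb_bound[OF r p, of n] lB[of "n-1"] thp B0 by (intro mult_mono) auto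
    finally show "norm (B' n) \<le> B * th r ^ nat \<bar>n\<bar>" by (simp add: mult.commute)
  qed (use thp in auto)
  have bij: "bij_betw (\<lambda>m::int. m - 1) UNIV UNIV"
    by (rule bij_betwI[where g = "\<lambda>m. m + 1"]) auto
  have B'eq: "B' m = Bn (m - 1)" for m by (simp add: B'_def Bn_def)
  have sBn: "Bn summable_on UNIV"
    using summable_on_reindex_bij_betw[OF bij, of Bn] sB' by (simp add: B'eq[symmetric])
  have iB: "infsum Bn UNIV = infsum B' UNIV"
    using infsum_reindex_bij_betw[OF bij, of Bn] by (simp add: B'eq[symmetric])
  have split: "l n * fblock ea (eb p) n z = A n + Bn n" for n
    using z0 by (simp add: fblock_def A_def Bn_def power_int_add algebra_simps)
  have cofs: "cof p l n * z powi n = A n + B' n" for n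
    by (simp add: cof_def A_def B'_def algebra_simps)
  show "(\<lambda>n. l n * fblock ea (eb p) n z) summable_on UNIV"
    unfolding split by (intro summable_on_add sA sBn)
  show "(\<lambda>n. cof p l n * z powi n) summable_on UNIV"
    unfolding cofs by (intro summable_on_add sA sB')
  show "(\<Sum>\<^sub>\<infinity>n. l n * fblock ea (eb p) n z) = (\<Sum>\<^sub>\<infinity>n. cof p l n * z powi n)"
    unfolding split cofs using infsum_add[OF sA sBn] infsum_add[OF sA sB'] iB by simp
qed



lemma rho_ex:
  assumes "p > 0"
  defines "\<rho> \<equiv> (SOME \<rho>::real. 0 < \<rho> \<and> rad_in ea (eb p) < ereal \<rho> \<and> ereal \<rho> < rad_out ea (eb p))"
  shows "1/2 < \<rho> \<and> \<rho> < 1"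
proof -
  have "\<exists>\<rho>::real. 0 < \<rho> \<and> rad_in ea (eb p) < ereal \<rho> \<and> ereal \<rho> < rad_out ea (eb p)"
    using assms by (intro exI[of _ "3/4"]) (simp add: rad_in_ex rad_out_ex)
  from someI_ex[OF this] show ?thesis
    using assms by (simp add: rad_in_ex rad_out_ex \<rho>_def)
qed

lemma lc_ex:
  assumes p: "p > 0" and rep: "represents p ea (eb p) l f"
  shows "laurent_coeff ea (eb p) f k = cof p l k"
proof -
  define \<rho> where "\<rho> = (SOME \<rho>::real. 0 < \<rho> \<and> rad_in ea (eb p) < ereal \<rho> \<and> ereal \<rho> < rad_out ea (eb p))"
  have \<rho>: "1/2 < \<rho>" "\<rho> < 1" using rho_ex[OF p] by (auto simp: \<rho>_def)
  have l: "l \<in> lp p" using rep by (simp add: represents_def)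
  define B where "B = lpnorm p l"
  have lB: "cmod (l m) \<le> B" for m using lp_bound[OF l p] by (simp add: B_def)
  note thp = th_props[OF \<rho>]
  have summ: "(\<lambda>n. norm (cof p l n) * \<rho> powi n) summable_on UNIV"
  proof (rule summable_on_comparison_test[OF summable_on_cmult_right[OF geo_int_summable[of "th \<rho>"]]])
    show "norm (cof p l n) * \<rho> powi n \<le> 2 * B * th \<rho> ^ nat \<bar>n\<bar>" for n
      by (rule cof_bound[OF \<rho> p lB])
    show "0 \<le> norm (cof p l n) * \<rho> powi n" for n using \<rho> by simp
  qed (use thp in auto)
  have F: "f z = (\<Sum>\<^sub>\<infinity>n. cof p l n * z powi n)" if "z \<in> sphere 0 \<rho>" for z
  proof -
    have z: "1/2 < cmod z" "cmod z < 1" using that \<rho> by auto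
    then have "z \<in> Omega ea (eb p)" using p by (simp add: z_omega)
    then have "f z = (\<Sum>\<^sub>\<infinity>n. l n * fblock ea (eb p) n z)" using rep by (simp add: represents_def)
    also have "\<dots> = (\<Sum>\<^sub>\<infinity>n. cof p l n * z powi n)" by (rule lemmaR(3)[OF p l z])
    finally show ?thesis .
  qed
  have "contour_integral (circlepath 0 \<rho>) (\<lambda>z. f z / z powi (k+1)) = 2 * of_real pi * \<i> * cof p l k"
    by (rule laurent_coeff_series[OF _ summ F]) (use \<rho> in auto)
  then show ?thesis by (simp add: laurent_coeff_def \<rho>_def[symmetric])
qed

lemma cof_inj:
  assumes p: "p > 0" and eq: "\<And>k. cof p l k = cof p l' k"
  shows "l = l'"
proof -
  have neg: "l k = l' k" if "k < 0" for k
  proof -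
    have "ea k * l k = ea k * l' k" using eq[of k] that by (simp add: cof_def eb_def)
    then show ?thesis using ea_nz[of k] by simp
  qed
  have pos: "l (int n) = l' (int n)" for n
  proof (induction n)
    case 0
    then show ?case using eq[of 0] by (simp add: cof_def eb_def ea_def)
  next
    case (Suc n)
    then show ?case using eq[of "int n + 1"] by (simp add: cof_def ea_def add.commute)
  qed
  show ?thesis
  proof
    fix k :: int show "l k = l' k"
      using neg pos by (cases "k < 0") (auto, metis nonneg_int_cases not_less)
  qed
qed

lemma rep_unique:
  assumes "p > 0" "represents p ea (eb p) l f" "represents p ea (eb p) l' f"
  shows "l = l'"
  using lc_ex[OF assms(1,2)] lc_ex[OF assms(1,3)] by (intro cof_inj[OF assms(1)]) metis

lemma rep_zero: "represents p a b (\<lambda>n. 0) (\<lambda>z. 0)"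
  by (simp add: represents_def lp_def)

lemma rep_scale:
  assumes "p > 0" "represents p a b l f"
  shows "represents p a b (\<lambda>n. c * l n) (\<lambda>z. c * f z)"
proof -
  have l: "(\<lambda>n. cmod (l n) powr p) summable_on UNIV" using assms by (simp add: represents_def lp_def)
  have "(\<lambda>n. cmod (c * l n) powr p) = (\<lambda>n. cmod c powr p * cmod (l n) powr p)"
    by (simp add: norm_mult powr_mult)
  then have "(\<lambda>n. c * l n) \<in> lp p" using summable_on_cmult_right[OF l] by (simp add: lp_def)
  moreover have "\<forall>z\<in>Omega a b. (\<lambda>n. c * l n * fblock a b n z) summable_on UNIV"
    using assms(2) by (auto simp: represents_def mult.assoc intro!: summable_on_cmult_right)
  moreover have "\<forall>z. c * f z = (if z \<in> Omega a b then (\<Sum>\<^sub>\<infinity>n. c * l n * fblock a b n z) else 0)"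
    using assms(2) by (auto simp: represents_def mult.assoc infsum_cmult_right')
  ultimately show ?thesis by (simp add: represents_def)
qed

lemma rep_fun_eq: "represents p a b l f \<Longrightarrow> represents p a b l g \<Longrightarrow> f = g"
  by (auto simp: represents_def fun_eq_iff)



definition Top :: "real \<Rightarrow> (int \<Rightarrow> complex) \<Rightarrow> int \<Rightarrow> complex" where
  "Top p l m = (if m < 0 then 0 else
     (complex_of_real (Pw p (m+1)) * l (m+1) + (-1) ^ nat m * l 0) / complex_of_real (Pw p m))"

lemma cofT_alg:
  fixes A Bm C x y u s :: complex
  assumes "A \<noteq> 0" "Bm \<noteq> 0" "C \<noteq> 0"
  shows "(A * x + (- s) * y) / Bm + (C / Bm) * ((Bm * u + s * y) / C) = (A / Bm) * (x + (Bm / A) * u)"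
  using assms by (simp add: field_simps)

lemma cofT:
  assumes p: "p > 0"
  shows "cof p (Top p l) m = ew p (m+1) * cof p l (m+1)"
proof -
  have nz: "complex_of_real (Pw p k) \<noteq> 0" for k using Pw_pos[OF p, of k] by simp
  have "m < 0 \<or> m = 0 \<or> m = int (nat (m-1)) + 1" by auto
  then consider "m < 0" | "m = 0" | k where "m = int k + 1" by blast
  then show ?thesis
  proof cases
    case 1
    then show ?thesis by (simp add: cof_def Top_def eb_def ew_def)
  next
    case 2
    have "cof p (Top p l) 0 = complex_of_real (Pw p 1) * l 1 + l 0"
      by (simp add: cof_def Top_def eb_def ea_def)
    moreover have "ew p 1 * cof p l 1 = complex_of_real (Pw p 1) * (l 1 + (1 / complex_of_real (Pw p 1)) * l 0)"
      by (simp add: cof_def ew_def eb_def ea_def)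
    ultimately show ?thesis using 2 nz[of 1] by (simp add: distrib_left)
  next
    case 3
    define A where "A = complex_of_real (Pw p (m+1))"
    define Bm where "Bm = complex_of_real (Pw p m)"
    define C where "C = complex_of_real (Pw p (m-1))"
    define s where "s = ((-1) ^ k :: complex)"
    have m0: "\<not> m < 0" "\<not> m - 1 < 0" "m \<noteq> 0" using 3 by auto
    have nm: "nat m = Suc k" "nat (m - 1) = k" "m - 1 + 1 = m" using 3 by auto
    have T1: "Top p l m = (A * l (m+1) + (- s) * l 0) / Bm"
      unfolding Top_def using m0 by (simp add: nm A_def Bm_def s_def)
    have T2: "Top p l (m-1) = (Bm * l m + s * l 0) / C"
      unfolding Top_def using m0 by (simp only: if_False nm A_def Bm_def C_def s_def)
    have E1: "eb p (m-1) = C / Bm" using m0 by (simp add: eb_def C_def Bm_def nm)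
    have E2: "ew p (m+1) = A / Bm"
    proof -
      have "\<not> (m+1 \<le> 0)" "m + 1 - 1 = m" using 3 by auto
      then show ?thesis unfolding ew_def A_def Bm_def by (simp only: if_False of_real_divide)
    qed
    have E3: "eb p m = Bm / A" using m0 by (simp add: eb_def A_def Bm_def)
    have E4: "ea m = 1" "ea (m+1) = 1" using m0 3 by (auto simp: ea_def)
    have "cof p (Top p l) m = Top p l m + (C / Bm) * Top p l (m-1)"
      by (simp only: cof_def E1 E4 mult_1)
    also have "\<dots> = (A / Bm) * (l (m+1) + (Bm / A) * l m)"
      unfolding T1 T2 by (rule cofT_alg) (use nz in \<open>auto simp: A_def Bm_def C_def\<close>)
    also have "\<dots> = ew p (m+1) * cof p l (m+1)"
      by (simp only: cof_def E2 E3 E4 mult_1 add_diff_cancel_right')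
    finally show ?thesis .
  qed
qed

lemma powr_add_le:
  fixes x y p :: real
  assumes "0 \<le> x" "0 \<le> y" "0 < p"
  shows "(x + y) powr p \<le> 2 powr p * (x powr p + y powr p)"
proof -
  have "(x + y) powr p \<le> (2 * max x y) powr p"
    using assms by (intro powr_mono2) auto
  also have "\<dots> = 2 powr p * max x y powr p"
    using assms by (simp add: powr_mult)
  also have "max x y powr p \<le> x powr p + y powr p"
    by (cases "x \<le> y") (auto simp: max_def)
  then have "2 powr p * max x y powr p \<le> 2 powr p * (x powr p + y powr p)"
    by (intro mult_left_mono) auto
  finally show ?thesis .
qed

definition qq :: "real \<Rightarrow> int \<Rightarrow> real" where
  "qq p m = (if m < 0 then 0 else (1 / Pw p m) powr p)"

lemma qq_nonneg: "qq p m \<ge> 0" by (simp add: qq_def)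

lemma qq_summable:
  assumes p: "p > 0"
  shows "qq p summable_on UNIV"
proof (rule real_nonneg_int_summable)
  have eq: "qq p (int n) = real (Suc n) powr (- (p + 1))" for n
  proof -
    have "qq p (int n) = inverse (Pw p (int n) powr p)"
      by (simp add: qq_def divide_inverse inverse_powr)
    also have "\<dots> = inverse (real (Suc n) powr (p + 1))"
      using Pw_powr[OF p, of "int n"] by (simp add: add.commute)
    finally show ?thesis by (simp add: powr_minus[symmetric] add.commute)
  qed
  have "summable (\<lambda>n. real (Suc n) powr (- (p + 1)))"
    using summable_Suc_iff[where f = "\<lambda>n. real n powr (- (p + 1))"] summable_real_powr_iff p by simp
  then show "summable (\<lambda>n. qq p (int n))" by (simp add: eq)
  show "summable (\<lambda>n. qq p (- int n - 1))" by (simp add: qq_def)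
qed (simp add: qq_nonneg)

lemma single_le_infsum:
  assumes "(\<lambda>n. cmod (l n) powr p) summable_on UNIV"
  shows "cmod (l k) powr p \<le> (\<Sum>\<^sub>\<infinity>n. cmod (l n) powr p)"
proof -
  have "cmod (l k) powr p = (\<Sum>\<^sub>\<infinity>m\<in>{k}. cmod (l m) powr p)" by simp
  also have "\<dots> \<le> (\<Sum>\<^sub>\<infinity>m. cmod (l m) powr p)"
    by (rule infsum_mono2[OF _ assms]) auto
  finally show ?thesis .
qed

definition Cp :: "real \<Rightarrow> real" where
  "Cp p = (2 powr p * 4 powr p + 2 powr p * infsum (qq p) UNIV) powr (1/p)"

lemma Top_lp:
  assumes p: "p \<ge> 1" and l: "l \<in> lp p"
  shows "Top p l \<in> lp p" "lpnorm p (Top p l) \<le> Cp p * lpnorm p l"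
proof -
  have p0: "p > 0" using p by simp
  have sl: "(\<lambda>n. cmod (l n) powr p) summable_on UNIV" using l by (simp add: lp_def)
  define S where "S = (\<Sum>\<^sub>\<infinity>n. cmod (l n) powr p)"
  define Q where "Q = infsum (qq p) UNIV"
  have S0: "0 \<le> S" unfolding S_def by (intro infsum_nonneg) auto
  have Q0: "0 \<le> Q" unfolding Q_def by (intro infsum_nonneg) (auto simp: qq_nonneg)
  have bij: "bij_betw (\<lambda>m::int. m + 1) UNIV UNIV"
    by (rule bij_betwI[where g = "\<lambda>m. m - 1"]) auto
  have sl1: "(\<lambda>m. cmod (l (m+1)) powr p) summable_on UNIV"
    using summable_on_reindex_bij_betw[OF bij, of "\<lambda>n. cmod (l n) powr p"] sl by simp
  have il1: "(\<Sum>\<^sub>\<infinity>m. cmod (l (m+1)) powr p) = S"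
    using infsum_reindex_bij_betw[OF bij, of "\<lambda>n. cmod (l n) powr p"] by (simp add: S_def)
  define G where "G m = 2 powr p * 4 powr p * cmod (l (m+1)) powr p + 2 powr p * cmod (l 0) powr p * qq p m" for m
  have sG: "G summable_on UNIV"
    unfolding G_def
    by (intro summable_on_add summable_on_cmult_right sl1 qq_summable p0)
  have iG: "infsum G UNIV = 2 powr p * 4 powr p * S + 2 powr p * cmod (l 0) powr p * Q"
    unfolding G_def Q_def
    using infsum_add[OF summable_on_cmult_right[OF sl1] summable_on_cmult_right[OF qq_summable[OF p0]]]
      infsum_cmult_right'[of "2 powr p * 4 powr p" "\<lambda>m. cmod (l (m+1)) powr p"]
      infsum_cmult_right'[of "2 powr p * cmod (l 0) powr p" "qq p"] il1
    by simp
  have l0: "cmod (l 0) powr p \<le> S" unfolding S_def by (rule single_le_infsum[OF sl])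
  have iG2: "infsum G UNIV \<le> (2 powr p * 4 powr p + 2 powr p * Q) * S"
    unfolding iG using l0 Q0 by (simp add: algebra_simps mult_left_mono mult_right_mono)
  have pt: "cmod (Top p l m) powr p \<le> G m" for m
  proof (cases "m < 0")
    case True
    then show ?thesis by (simp add: Top_def G_def qq_def)
  next
    case False
    have Pm: "Pw p m > 0" using Pw_pos[OF p0] by simp
    have "cmod (Top p l m) \<le> (Pw p (m+1) * cmod (l (m+1)) + cmod (l 0)) / Pw p m"
    proof -
      have "cmod (complex_of_real (Pw p (m+1)) * l (m+1) + (-1) ^ nat m * l 0) \<le> Pw p (m+1) * cmod (l (m+1)) + cmod (l 0)"
        using Pw_pos[OF p0, of "m+1"] by (rule_tac order_trans[OF norm_triangle_ineq]) (simp add: norm_mult norm_power)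
      then show ?thesis using False Pm by (simp add: Top_def norm_divide divide_right_mono)
    qed
    also have "\<dots> = (Pw p (m+1) / Pw p m) * cmod (l (m+1)) + cmod (l 0) / Pw p m"
      using Pm by (simp add: field_simps)
    also have "\<dots> \<le> 4 * cmod (l (m+1)) + cmod (l 0) / Pw p m"
      using Pw_ratio_le4[OF p, of m] False by (intro add_right_mono mult_right_mono) auto
    finally have le: "cmod (Top p l m) \<le> 4 * cmod (l (m+1)) + cmod (l 0) / Pw p m" .
    have "cmod (Top p l m) powr p \<le> (4 * cmod (l (m+1)) + cmod (l 0) / Pw p m) powr p"
      using le p0 by (intro powr_mono2) auto
    also have "\<dots> \<le> 2 powr p * ((4 * cmod (l (m+1))) powr p + (cmod (l 0) / Pw p m) powr p)"
      using Pm p0 by (intro powr_add_le) auto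
    also have "\<dots> = G m"
      using False Pm by (simp add: G_def qq_def powr_mult powr_divide algebra_simps)
    finally show ?thesis .
  qed
  have sT: "(\<lambda>m. cmod (Top p l m) powr p) summable_on UNIV"
    by (rule summable_on_comparison_test[OF sG]) (use pt in auto)
  then show "Top p l \<in> lp p" by (simp add: lp_def)
  have "(\<Sum>\<^sub>\<infinity>m. cmod (Top p l m) powr p) \<le> infsum G UNIV"
    by (rule infsum_mono[OF sT sG]) (use pt in auto)
  also have "\<dots> \<le> (2 powr p * 4 powr p + 2 powr p * Q) * S" by (rule iG2)
  finally have "(\<Sum>\<^sub>\<infinity>m. cmod (Top p l m) powr p) powr (1/p) \<le> ((2 powr p * 4 powr p + 2 powr p * Q) * S) powr (1/p)"
    using p0 by (intro powr_mono2) (auto intro: infsum_nonneg)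
  also have "\<dots> = Cp p * S powr (1/p)"
    using S0 Q0 by (simp add: powr_mult Cp_def Q_def)
  finally show "lpnorm p (Top p l) \<le> Cp p * lpnorm p l"
    by (simp add: lpnorm_def S_def)
qed



lemma Bw_rep:
  assumes p: "p \<ge> 1" and rep: "represents p ea (eb p) l f"
  shows "represents p ea (eb p) (Top p l) (Bw ea (eb p) (ew p) f)"
    and "\<forall>z\<in>Omega ea (eb p). (\<lambda>n. ew p n * laurent_coeff ea (eb p) f n * z powi (n - 1)) summable_on UNIV"
proof -
  have p0: "p > 0" using p by simp
  have l: "l \<in> lp p" using rep by (simp add: represents_def)
  have Tl: "Top p l \<in> lp p" by (rule Top_lp(1)[OF p l])
  have bij: "bij_betw (\<lambda>m::int. m + 1) UNIV UNIV"
    by (rule bij_betwI[where g = "\<lambda>m. m - 1"]) auto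
  define E where "E z n = ew p n * laurent_coeff ea (eb p) f n * z powi (n - 1)" for z n
  have E1: "E z (m + 1) = cof p (Top p l) m * z powi m" for z m
    by (simp add: E_def lc_ex[OF p0 rep] cofT[OF p0])
  have sE: "E z summable_on UNIV" and iE: "infsum (E z) UNIV = (\<Sum>\<^sub>\<infinity>n. Top p l n * fblock ea (eb p) n z)"
    if "z \<in> Omega ea (eb p)" for z
  proof -
    have z: "1/2 < cmod z" "cmod z < 1" using that p0 by (simp_all add: z_omega)
    have "(\<lambda>m. E z (m + 1)) summable_on UNIV" unfolding E1 by (rule lemmaR(2)[OF p0 Tl z])
    then show "E z summable_on UNIV" using summable_on_reindex_bij_betw[OF bij, of "E z"] by simp
    have "infsum (E z) UNIV = (\<Sum>\<^sub>\<infinity>m. E z (m + 1))" using infsum_reindex_bij_betw[OF bij, of "E z"] by simp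
    also have "\<dots> = (\<Sum>\<^sub>\<infinity>m. cof p (Top p l) m * z powi m)" unfolding E1 ..
    also have "\<dots> = (\<Sum>\<^sub>\<infinity>n. Top p l n * fblock ea (eb p) n z)" by (rule lemmaR(3)[OF p0 Tl z, symmetric])
    finally show "infsum (E z) UNIV = (\<Sum>\<^sub>\<infinity>n. Top p l n * fblock ea (eb p) n z)" .
  qed
  show "\<forall>z\<in>Omega ea (eb p). (\<lambda>n. ew p n * laurent_coeff ea (eb p) f n * z powi (n - 1)) summable_on UNIV"
    using sE unfolding E_def by blast
  have s2: "\<forall>z\<in>Omega ea (eb p). (\<lambda>n. Top p l n * fblock ea (eb p) n z) summable_on UNIV"
    using lemmaR(1)[OF p0 Tl] p0 by (simp add: z_omega)
  show "represents p ea (eb p) (Top p l) (Bw ea (eb p) (ew p) f)"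
    unfolding represents_def using Tl s2 iE unfolding E_def by (auto simp: Bw_def)
qed

lemma Cp_pos: "p > 0 \<Longrightarrow> Cp p > 0"
proof -
  assume p: "p > 0"
  have "0 \<le> infsum (qq p) UNIV" by (intro infsum_nonneg) (auto simp: qq_nonneg)
  then have "2 powr p * 4 powr p + 2 powr p * infsum (qq p) UNIV > 0" by (simp add: add_pos_nonneg)
  then show ?thesis by (simp add: Cp_def)
qed

lemma Bw_bounded_ex:
  assumes p: "p \<ge> 1"
  shows "Bw_bounded p ea (eb p) (ew p)"
proof -
  have p0: "p > 0" using p by simp
  have part1: "\<forall>f\<in>lpab p ea (eb p).
        (\<forall>z\<in>Omega ea (eb p). (\<lambda>n. ew p n * laurent_coeff ea (eb p) f n * z powi (n - 1)) summable_on UNIV) \<and>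
        Bw ea (eb p) (ew p) f \<in> lpab p ea (eb p)"
    using Bw_rep[OF p] by (auto simp: lpab_def)
  have part2: "lpab_norm p ea (eb p) (Bw ea (eb p) (ew p) f) \<le> Cp p * lpab_norm p ea (eb p) f"
    if "f \<in> lpab p ea (eb p)" for f
  proof -
    define S where "S = {lpnorm p l | l. represents p ea (eb p) l f}"
    have ne: "S \<noteq> {}" using that by (auto simp: S_def lpab_def)
    have bnd: "lpab_norm p ea (eb p) (Bw ea (eb p) (ew p) f) / Cp p \<le> s" if "s \<in> S" for s
    proof -
      obtain l where s: "s = lpnorm p l" and rep: "represents p ea (eb p) l f" using \<open>s \<in> S\<close> by (auto simp: S_def)
      have l: "l \<in> lp p" using rep by (simp add: represents_def)
      have "lpab_norm p ea (eb p) (Bw ea (eb p) (ew p) f) \<le> lpnorm p (Top p l)"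
        unfolding lpab_norm_def
        by (rule cInf_lower) (use Bw_rep(1)[OF p rep] in \<open>auto intro: bdd_belowI[where m = 0] simp: lpnorm_nonneg\<close>)
      also have "\<dots> \<le> Cp p * lpnorm p l" by (rule Top_lp(2)[OF p l])
      finally show ?thesis using Cp_pos[OF p0] by (simp add: s field_simps)
    qed
    have "lpab_norm p ea (eb p) (Bw ea (eb p) (ew p) f) / Cp p \<le> Inf S"
      by (rule cInf_greatest[OF ne bnd])
    then show ?thesis using Cp_pos[OF p0] by (simp add: lpab_norm_def S_def field_simps)
  qed
  show ?thesis unfolding Bw_bounded_def using part1 part2 by blast
qed



definition lg :: "real \<Rightarrow> int \<Rightarrow> complex" where
  "lg p m = (if 0 \<le> m \<and> even m then complex_of_real (1 / Pw p m) else 0)"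

lemma lg_lp: "p > 0 \<Longrightarrow> lg p \<in> lp p"
proof -
  assume p: "p > 0"
  have "(\<lambda>m. cmod (lg p m) powr p) summable_on UNIV"
  proof (rule summable_on_comparison_test[OF qq_summable[OF p]])
    fix m
    show "cmod (lg p m) powr p \<le> qq p m"
      using Pw_pos[OF p, of m] by (auto simp: lg_def qq_def norm_divide)
  qed auto
  then show ?thesis by (simp add: lp_def)
qed

lemma Top_lg: "p > 0 \<Longrightarrow> Top p (lg p) = lg p"
proof
  fix m :: int assume p: "p > 0"
  have nz: "complex_of_real (Pw p k) \<noteq> 0" for k using Pw_pos[OF p, of k] by simp
  show "Top p (lg p) m = lg p m"
  proof (cases "m < 0")
    case True then show ?thesis by (simp add: Top_def lg_def)
  next
    case False
    have ev: "even (nat m) \<longleftrightarrow> even m" using False by (simp add: even_nat_iff)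
    show ?thesis
    proof (cases "even m")
      case True
      then have "(-1::complex) ^ nat m = 1" using ev by simp
      moreover have "lg p (m+1) = 0" using True by (simp add: lg_def)
      ultimately show ?thesis using False True nz[of m] by (simp add: Top_def lg_def)
    next
      case odd: False
      then have "(-1::complex) ^ nat m = -1" using ev by simp
      moreover have "lg p (m+1) = complex_of_real (1 / Pw p (m+1))" using odd False by (simp add: lg_def)
      ultimately show ?thesis using False odd nz[of "m+1"] by (simp add: Top_def lg_def)
    qed
  qed
qed

lemma powr_aux:
  fixes x c p :: real
  assumes "x > 0"
  shows "x powr p * c / x powr (p + 1) = c * inverse x"
proof -
  have "x powr (p + 1) = x powr p * x" using assms by (simp add: powr_add)
  moreover have "x powr p > 0" using assms by simp
  ultimately show ?thesis using assms by (simp add: field_simps)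
qed

lemma harmonic_kill:
  assumes p: "p \<ge> 1" and l: "l \<in> lp p" and T: "Top p l = (\<lambda>n. -1 * l n)"
  shows "l = (\<lambda>n. 0)"
proof -
  have p0: "p > 0" using p by simp
  have nz: "complex_of_real (Pw p k) \<noteq> 0" for k using Pw_pos[OF p0, of k] by simp
  have neg: "l m = 0" if "m < 0" for m
    using fun_cong[OF T, of m] that by (simp add: Top_def)
  have pos: "l (int n) = (-1) ^ n * of_nat (n+1) * l 0 / complex_of_real (Pw p (int n))" for n
  proof (induction n)
    case 0 then show ?case by simp
  next
    case (Suc n)
    have "Top p l (int n) = - l (int n)" using fun_cong[OF T, of "int n"] by simp
    then have "(complex_of_real (Pw p (int n + 1)) * l (int n + 1) + (-1) ^ n * l 0) / complex_of_real (Pw p (int n)) = - l (int n)"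
      by (simp add: Top_def)
    then have "complex_of_real (Pw p (int n + 1)) * l (int n + 1) = - complex_of_real (Pw p (int n)) * l (int n) - (-1) ^ n * l 0"
      using nz[of "int n"] by (simp add: field_simps)
    also have "\<dots> = (-1) ^ Suc n * of_nat (Suc n + 1) * l 0"
      using nz[of "int n"] by (simp add: Suc.IH field_simps)
    finally have "l (int n + 1) = (-1) ^ Suc n * of_nat (Suc n + 1) * l 0 / complex_of_real (Pw p (int n + 1))"
      using nz[of "int n + 1"] by (simp add: field_simps)
    then show ?case by (simp add: add.commute)
  qed
  have l0: "l 0 = 0"
  proof (rule ccontr)
    assume l0: "l 0 \<noteq> 0"
    define c where "c = cmod (l 0) powr p"
    have c: "c > 0" using l0 by (simp add: c_def)
    have eq: "cmod (l (int n)) powr p = c * inverse (real (Suc n))" for n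
    proof -
      have "cmod (l (int n)) = real (Suc n) * cmod (l 0) / Pw p (int n)"
        using Pw_pos[OF p0, of "int n"] by (subst pos) (simp add: norm_mult norm_divide norm_power del: of_nat_add of_nat_Suc)
      then have "cmod (l (int n)) powr p = real (Suc n) powr p * c / Pw p (int n) powr p"
        using Pw_pos[OF p0, of "int n"] by (simp add: powr_divide powr_mult c_def)
      also have "\<dots> = real (Suc n) powr p * c / real (Suc n) powr (p + 1)"
        using Pw_powr[OF p0, of "int n"] by (simp add: add.commute)
      also have "\<dots> = c * inverse (real (Suc n))"
        by (rule powr_aux) simp
      finally show ?thesis .
    qed
    have s: "(\<lambda>m. cmod (l m) powr p) summable_on UNIV" using l by (simp add: lp_def)
    then have "(\<lambda>m. cmod (l m) powr p) summable_on range int" by (rule summable_on_subset) auto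
    then have "(\<lambda>n::nat. cmod (l (int n)) powr p) summable_on UNIV"
      by (subst (asm) summable_on_reindex) (auto simp: o_def)
    then have "summable (\<lambda>n::nat. cmod (l (int n)) powr p)"
      by (subst (asm) summable_on_UNIV_nonneg_real_iff) auto
    then have "summable (\<lambda>n. c * inverse (real (Suc n)))" by (simp add: eq)
    then have "summable (\<lambda>n. inverse c * (c * inverse (real (Suc n))))" by (rule summable_mult)
    then have "summable (\<lambda>n. inverse (real (Suc n)))" using c by simp
    then have "summable (\<lambda>n. inverse (real n))"
      using summable_Suc_iff[where f = "\<lambda>n. inverse (real n)"] by simp
    then show False using not_summable_harmonic by auto
  qed
  show ?thesis
  proof
    fix m :: int show "l m = 0"
      using neg[of m] pos[of "nat m"] l0 by (cases "m < 0") auto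
  qed
qed



theorem corollary4p16:
  fixes p :: real
  assumes "1 \<le> p"
  shows "\<exists>a b w. admissible a b \<and> Bw_bounded p a b w \<and> \<not> Bw_similar_to_shift p a b w"
proof (intro exI conjI)
  have p0: "p > 0" using assms by simp
  show "admissible ea (eb p)" by (rule admissible_ex[OF p0])
  show "Bw_bounded p ea (eb p) (ew p)" by (rule Bw_bounded_ex[OF assms])
  show "\<not> Bw_similar_to_shift p ea (eb p) (ew p)"
  proof
    assume "Bw_similar_to_shift p ea (eb p) (ew p)"
    then obtain \<alpha> J where bij: "bij_betw J (lpab p ea (eb p)) (lp p)"
      and hom: "\<forall>c. \<forall>f\<in>lpab p ea (eb p). J (\<lambda>z. c * f z) = (\<lambda>n. c * J f n)"
      and int: "\<forall>f\<in>lpab p ea (eb p). J (Bw ea (eb p) (ew p) f) = wshift \<alpha> (J f)"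
      unfolding Bw_similar_to_shift_def by blast
    define L where "L = lpab p ea (eb p)"
    define T where "T = Bw ea (eb p) (ew p)"
    have inj: "inj_on J L" using bij by (simp add: bij_betw_def L_def)
    have img: "J ` L = lp p" using bij by (simp add: bij_betw_def L_def)
    have TL: "T f \<in> L" if "f \<in> L" for f
      using that Bw_rep(1)[OF assms] by (auto simp: L_def T_def lpab_def)
    have zL: "(\<lambda>z. 0) \<in> L" using rep_zero by (auto simp: L_def lpab_def)
    have scL: "(\<lambda>z. c * f z) \<in> L" if "f \<in> L" for f c
      using that rep_scale[OF p0] unfolding L_def lpab_def by blast
    define g where "g = (\<lambda>z. if z \<in> Omega ea (eb p) then (\<Sum>\<^sub>\<infinity>n. lg p n * fblock ea (eb p) n z) else 0)"
    have rg: "represents p ea (eb p) (lg p) g"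
      unfolding represents_def g_def using lg_lp[OF p0] lemmaR(1)[OF p0 lg_lp[OF p0]] p0
      by (auto simp: z_omega)
    have gL: "g \<in> L" using rg by (auto simp: L_def lpab_def)
    have Tg: "T g = g"
      using Bw_rep(1)[OF assms rg] rg Top_lg[OF p0] by (auto simp: T_def intro: rep_fun_eq)
    have gnz: "g \<noteq> (\<lambda>z. 0)"
    proof
      assume "g = (\<lambda>z. 0)"
      then have "lg p = (\<lambda>n. 0)" using rep_unique[OF p0 _ rep_zero] rg by simp
      then have "lg p 0 = 0" by simp
      then show False by (simp add: lg_def)
    qed
    have J0: "J (\<lambda>z. 0) = (\<lambda>n. 0)"
    proof -
      have "J (\<lambda>z. 0 * g z) = (\<lambda>n. 0 * J g n)" using hom gL unfolding L_def by blast
      then show ?thesis by simp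
    qed
    define x where "x = J g"
    have xfix: "wshift \<alpha> x = x"
    proof -
      have "J (T g) = wshift \<alpha> (J g)" using int gL unfolding L_def T_def by blast
      then show ?thesis using Tg by (simp add: x_def)
    qed
    have xnz: "x \<noteq> (\<lambda>n. 0)"
    proof
      assume "x = (\<lambda>n. 0)"
      then have "J g = J (\<lambda>z. 0)" using J0 by (simp add: x_def)
      then have "g = (\<lambda>z. 0)" using inj gL zL by (auto dest: inj_onD)
      then show False using gnz by simp
    qed
    have xlp: "x \<in> lp p" using img gL by (auto simp: x_def)
    define y where "y = (\<lambda>m::int. (if even m then 1 else -1) * x m)"
    have ny: "cmod (y m) = cmod (x m)" for m by (simp add: y_def norm_mult)
    have ylp: "y \<in> lp p" using xlp by (simp add: lp_def ny)
    obtain h where hL: "h \<in> L" and Jh: "J h = y" using ylp img by (metis imageE)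
    have wy: "wshift \<alpha> y = (\<lambda>n. -1 * y n)"
    proof
      fix m :: int
      have "wshift \<alpha> y m = (if even (m+1) then 1 else -1) * wshift \<alpha> x m"
        by (simp add: wshift_def y_def)
      also have "\<dots> = (if even (m+1) then 1 else -1) * x m" using xfix by simp
      also have "\<dots> = -1 * y m" by (simp add: y_def)
      finally show "wshift \<alpha> y m = -1 * y m" .
    qed
    have "J (T h) = J (\<lambda>z. -1 * h z)"
    proof -
      have "J (T h) = wshift \<alpha> (J h)" using int hL unfolding L_def T_def by blast
      moreover have "J (\<lambda>z. -1 * h z) = (\<lambda>n. -1 * J h n)" using hom hL unfolding L_def by blast
      ultimately show ?thesis using wy Jh by simp
    qed
    then have Th: "T h = (\<lambda>z. -1 * h z)" using inj TL[OF hL] scL[OF hL, of "-1"] by (meson inj_onD)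
    obtain l where rh: "represents p ea (eb p) l h" using hL by (auto simp: L_def lpab_def)
    have r2: "represents p ea (eb p) (\<lambda>n. -1 * l n) (Bw ea (eb p) (ew p) h)"
      using rep_scale[OF p0 rh, of "-1"] Th by (simp add: T_def)
    have "Top p l = (\<lambda>n. -1 * l n)"
      by (rule rep_unique[OF p0 Bw_rep(1)[OF assms rh] r2])
    then have "l = (\<lambda>n. 0)" using harmonic_kill[OF assms _] rh by (simp add: represents_def)
    then have "h = (\<lambda>z. 0)" using rh rep_zero rep_fun_eq by metis
    then have "y = (\<lambda>n. 0)" using Jh J0 by simp
    then have "x = (\<lambda>n. 0)" by (auto simp: y_def fun_eq_iff split: if_splits dest: spec)
    then show False using xnz by simp
  qed
qed


end
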